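(* Let $S_0,S_1,S_2$ be pair-partitions of $[2k]$, $\lambda$ a Young diagram, and $f:[2k]\to 2\lambda$ a function with $f(i)=f(j)$ for some $i\neq j$. Let $S_0'=(i\ j)\cdot S_0$. Then (a) $f$ satisfies conditions (P0), (P1), (P2) with respect to $(S_0,S_1,S_2)$ if and only if it satisfies them with respect to $(S_0',S_1,S_2)$; (b) if these conditions are satisfied, then $(-1)^{\mathcal{L}(S_0,S_1)}+(-1)^{\mathcal{L}(S_0',S_1)}=0$.
   Context: Pair-partitions of $[2k]$ are sets of disjoint two-element subsets with union $[2k]$, identified with fixed-point-free involutions; for a permutation $\sigma$, $\sigma\cdot P$ has pair $\{\sigma(a),\sigma(b)\}$ iff $\{a,b\}\in P$, and $(i\ j)$ is the transposition. $\mathcal{L}(A,B)$ is the bipartite graph with a black vertex per pair of $A$, a white vertex per pair of $B$, and an edge for each $a\in[2k]$ joining the pairs containing $a$; it is a union of loops, $|\mathcal{L}(A,B)|$ is the number of loops and $(-1)^{\mathcal{L}(A,B)}=(-1)^{k-|\mathcal{L}(A,B)|}$. $2\lambda=(2\lambda_1,2\lambda_2,\dots)$; two boxes of $2\lambda$ are neighbors if in the same row and in columns $2m+1$, $2m+2$ for some $m\ge0$. The conditions, for all $l\in[2k]$: (P0) $f(l)$ and $f(S_0(l))$ are neighbors; (P1) $f(l)$ and $f(S_0\circ S_1(l))$ are in the same column; (P2) $f(l)$ and $f(S_2(l))$ are in the same row. *)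

theory Defs
  imports "HOL-Combinatorics.Transposition"
begin

text \<open>Pair-partitions of [2k] = {1..2k}, identified with fixed-point-free involutions
  (only the values on {1..2k} matter).\<close>
definition pair_partition :: "nat \<Rightarrow> (nat \<Rightarrow> nat) \<Rightarrow> bool" where
  "pair_partition k P \<longleftrightarrow>
     (\<forall>a\<in>{1..2*k}. P a \<in> {1..2*k} \<and> P a \<noteq> a \<and> P (P a) = a)"

text \<open>Action of a permutation: sigma.P has pair {sigma a, sigma b} iff {a,b} in P.\<close>
definition perm_act :: "(nat \<Rightarrow> nat) \<Rightarrow> (nat \<Rightarrow> nat) \<Rightarrow> (nat \<Rightarrow> nat)" where
  "perm_act \<sigma> P = \<sigma> \<circ> P \<circ> inv \<sigma>"

definition young_diagram :: "nat list \<Rightarrow> bool" where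
  "young_diagram lam \<longleftrightarrow> sorted_wrt (\<ge>) lam \<and> (\<forall>x\<in>set lam. 0 < x)"

text \<open>Boxes (row, column), 1-based, of the diagram 2 lambda.\<close>
definition boxes2 :: "nat list \<Rightarrow> (nat \<times> nat) set" where
  "boxes2 lam = {(r, c). 1 \<le> r \<and> r \<le> length lam \<and> 1 \<le> c \<and> c \<le> 2 * lam ! (r - 1)}"

definition neighbors :: "nat \<times> nat \<Rightarrow> nat \<times> nat \<Rightarrow> bool" where
  "neighbors b b' \<longleftrightarrow> fst b = fst b' \<and>
     (\<exists>m. {snd b, snd b'} = {2*m+1, 2*m+2})"

definition cond_P0 :: "nat \<Rightarrow> (nat \<Rightarrow> nat) \<Rightarrow> (nat \<Rightarrow> nat \<times> nat) \<Rightarrow> bool" where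
  "cond_P0 k S0 f \<longleftrightarrow> (\<forall>l\<in>{1..2*k}. neighbors (f l) (f (S0 l)))"

definition cond_P1 :: "nat \<Rightarrow> (nat \<Rightarrow> nat) \<Rightarrow> (nat \<Rightarrow> nat) \<Rightarrow> (nat \<Rightarrow> nat \<times> nat) \<Rightarrow> bool" where
  "cond_P1 k S0 S1 f \<longleftrightarrow> (\<forall>l\<in>{1..2*k}. snd (f l) = snd (f (S0 (S1 l))))"

definition cond_P2 :: "nat \<Rightarrow> (nat \<Rightarrow> nat) \<Rightarrow> (nat \<Rightarrow> nat \<times> nat) \<Rightarrow> bool" where
  "cond_P2 k S2 f \<longleftrightarrow> (\<forall>l\<in>{1..2*k}. fst (f l) = fst (f (S2 l)))"

definition conds :: "nat \<Rightarrow> (nat \<Rightarrow> nat) \<Rightarrow> (nat \<Rightarrow> nat) \<Rightarrow> (nat \<Rightarrow> nat) \<Rightarrow> (nat \<Rightarrow> nat \<times> nat) \<Rightarrow> bool" where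
  "conds k S0 S1 S2 f \<longleftrightarrow> cond_P0 k S0 f \<and> cond_P1 k S0 S1 f \<and> cond_P2 k S2 f"

text \<open>The bipartite graph L(A,B): black vertices Inl {a, A a}, white vertices Inr {a, B a},
  and for each a in [2k] an edge joining Inl {a, A a} and Inr {a, B a}.\<close>
definition L_vertices :: "nat \<Rightarrow> (nat \<Rightarrow> nat) \<Rightarrow> (nat \<Rightarrow> nat) \<Rightarrow> (nat set + nat set) set" where
  "L_vertices k A B = (\<lambda>a. Inl {a, A a}) ` {1..2*k} \<union> (\<lambda>a. Inr {a, B a}) ` {1..2*k}"

definition L_adj :: "nat \<Rightarrow> (nat \<Rightarrow> nat) \<Rightarrow> (nat \<Rightarrow> nat) \<Rightarrow> (nat set + nat set) rel" where
  "L_adj k A B = (\<Union>a\<in>{1..2*k}. {(Inl {a, A a}, Inr {a, B a}), (Inr {a, B a}, Inl {a, A a})})"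

definition num_loops :: "nat \<Rightarrow> (nat \<Rightarrow> nat) \<Rightarrow> (nat \<Rightarrow> nat) \<Rightarrow> nat" where
  "num_loops k A B = card (L_vertices k A B // ((L_adj k A B)\<^sup>* \<inter> (L_vertices k A B \<times> L_vertices k A B)))"

text \<open>(-1)^L(A,B) = (-1)^(k - |L(A,B)|).\<close>
definition loop_sign :: "nat \<Rightarrow> (nat \<Rightarrow> nat) \<Rightarrow> (nat \<Rightarrow> nat) \<Rightarrow> int" where
  "loop_sign k A B = (-1) ^ (k - num_loops k A B)"

end

theory Submission
  imports Defs "HOL-Combinatorics.Combinatorics"
begin


lemma orb_closed:
  assumes "x \<in> U" "\<And>y. y \<in> U \<Longrightarrow> f y \<in> U"
  shows "orbit f x \<subseteq> U"
proof
  fix y assume "y \<in> orbit f x" then show "y \<in> U" by induct (use assms in auto)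
qed

lemma orb_same:
  assumes "permutation p" "y \<in> orbit p x"
  shows "orbit p y = orbit p x"
  using assms cyclic_on_orbit' orbit_cyclic_eq3 by metis

lemma orb_sym:
  assumes "permutation p" "y \<in> orbit p x"
  shows "x \<in> orbit p y"
  using assms orb_same permutation_self_in_orbit by metis

lemma orb_chain:
  assumes perm: "permutation p" and ni: "i \<notin> orbit p j"
  shows "orbit p j \<subseteq> orbit (p \<circ> transpose i j) i"
proof -
  define m where "m = least_power p j"
  have m0: "m > 0" and mj: "(p ^^ m) j = j"
    using least_power_of_permutation[OF perm] m_def by auto
  have ij: "i \<noteq> j" using ni permutation_self_in_orbit[OF perm] by metis
  have step: "1 \<le> t \<and> t \<le> m \<longrightarrow> ((p \<circ> transpose i j) ^^ t) i = (p ^^ t) j" for t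
  proof (induction t)
    case 0 then show ?case by simp
  next
    case (Suc s)
    show ?case
    proof (cases "s = 0")
      case True then show ?thesis by simp
    next
      case False
      show ?thesis
      proof
        assume a: "1 \<le> Suc s \<and> Suc s \<le> m"
        have "1 \<le> s \<and> s \<le> m" using a False by simp
        then have IH: "((p \<circ> transpose i j) ^^ s) i = (p ^^ s) j" using Suc.IH by blast
        have n1: "(p ^^ s) j \<noteq> i"
          using ni False by (metis (mono_tags, lifting) CollectI bot_nat_0.not_eq_extremum orbit_altdef)
        have n2: "(p ^^ s) j \<noteq> j"
        proof
          assume "(p ^^ s) j = j"
          then have "m \<le> s" using least_power_le[where f=p and n=s and x=j] False m_def by simp
          then show False using a by simp
        qed
        show "((p \<circ> transpose i j) ^^ Suc s) i = (p ^^ Suc s) j"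
          using IH n1 n2 by simp
      qed
    qed
  qed
  show ?thesis
  proof
    fix y assume "y \<in> orbit p j"
    then obtain t where t: "y = (p ^^ t) j" "t < m"
      using orbit_altdef_bounded[OF mj m0] by auto
    show "y \<in> orbit (p \<circ> transpose i j) i"
    proof (cases "t = 0")
      case True
      then have "y = ((p \<circ> transpose i j) ^^ m) i" using step[of m] m0 mj t by simp
      then show ?thesis using m0 unfolding orbit_altdef by blast
    next
      case False
      then have "y = ((p \<circ> transpose i j) ^^ t) i" using step[of t] t by simp
      then show ?thesis using False unfolding orbit_altdef by blast
    qed
  qed
qed

lemma orb_merge_set:
  assumes perm: "permutation p" and ni: "j \<notin> orbit p i"
  shows "orbit (p \<circ> transpose i j) i = orbit p i \<union> orbit p j"
proof
  have ni': "i \<notin> orbit p j" using ni orb_sym perm by metis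
  have pp: "permutation (p \<circ> transpose i j)"
    by (simp add: perm permutation_compose permutation_swap_id)
  have "orbit p j \<subseteq> orbit (p \<circ> transpose i j) i" by (rule orb_chain[OF perm ni'])
  moreover have "orbit p i \<subseteq> orbit (p \<circ> transpose j i) j" by (rule orb_chain[OF perm ni])
  moreover have "j \<in> orbit (p \<circ> transpose i j) i"
    using calculation(1) permutation_self_in_orbit[OF perm] by blast
  then have "orbit (p \<circ> transpose j i) j = orbit (p \<circ> transpose i j) i"
    using orb_same[OF pp] by (metis transpose_commute)
  ultimately show "orbit p i \<union> orbit p j \<subseteq> orbit (p \<circ> transpose i j) i" by auto
next
  show "orbit (p \<circ> transpose i j) i \<subseteq> orbit p i \<union> orbit p j"
  proof (rule orb_closed)
    show "i \<in> orbit p i \<union> orbit p j" using permutation_self_in_orbit[OF perm] by auto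
    fix y assume y: "y \<in> orbit p i \<union> orbit p j"
    have "transpose i j y \<in> orbit p i \<union> orbit p j"
      using y permutation_self_in_orbit[OF perm] by (cases "y = i \<or> y = j") auto
    then show "(p \<circ> transpose i j) y \<in> orbit p i \<union> orbit p j"
      by (auto intro: orbit.step)
  qed
qed

lemma orb_separate:
  assumes perm: "permutation p" and ji: "j \<in> orbit p i" and ij: "i \<noteq> j"
  shows "j \<notin> orbit (p \<circ> transpose i j) i"
proof
  assume contra: "j \<in> orbit (p \<circ> transpose i j) i"
  define n where "n = least_power p i"
  have n0: "n > 0" and ni: "(p ^^ n) i = i"
    using least_power_of_permutation[OF perm] n_def by auto
  obtain m where m: "j = (p ^^ m) i" "m < n"
    using orbit_altdef_bounded[OF ni n0] ji by auto
  have m0: "m > 0" using m ij by (cases m) auto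
  have injp: "inj p" using perm permutation_bijective bij_is_inj by blast
  have dist: "s < t \<Longrightarrow> t < n \<Longrightarrow> (p ^^ s) i \<noteq> (p ^^ t) i" for s t
  proof
    assume st: "s < t" "t < n" and eq: "(p ^^ s) i = (p ^^ t) i"
    have "(p ^^ (t - s)) i = i" using funpow_diff[OF injp _ eq] st by simp
    then have "n \<le> t - s" using least_power_le[where f=p and n="t - s" and x=i] st n_def by simp
    then show False using st by simp
  qed
  define U where "U = {(p ^^ t) i | t. 0 < t \<and> t \<le> m}"
  have iU: "i \<notin> U"
  proof
    assume "i \<in> U"
    then obtain t where "i = (p ^^ t) i" "0 < t" "t \<le> m" unfolding U_def by auto
    then show False using dist[of 0 t] m by simp
  qed
  have jU: "j \<in> U" unfolding U_def using m m0 by auto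
  have "orbit (p \<circ> transpose i j) j \<subseteq> U"
  proof (rule orb_closed[OF jU])
    fix y assume "y \<in> U"
    then obtain t where t: "y = (p ^^ t) i" "0 < t" "t \<le> m" unfolding U_def by auto
    show "(p \<circ> transpose i j) y \<in> U"
    proof (cases "t = m")
      case True
      then have "(p \<circ> transpose i j) y = (p ^^ 1) i" using t m by simp
      then show ?thesis unfolding U_def using m0 by (metis (mono_tags, lifting) CollectI One_nat_def Suc_leI zero_less_one)
    next
      case False
      have "y \<noteq> i" using t dist[of 0 t] m by simp
      moreover have "y \<noteq> j" using t dist[of t m] m False by simp
      ultimately have "(p \<circ> transpose i j) y = (p ^^ Suc t) i" using t by simp
      moreover have "(p ^^ Suc t) i \<in> U" unfolding U_def using t False by (intro CollectI exI[of _ "Suc t"]) simp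
      ultimately show ?thesis by simp
    qed
  qed
  moreover have "i \<in> orbit (p \<circ> transpose i j) j"
    using contra orb_sym perm by (simp add: orb_sym permutation_compose permutation_swap_id)
  ultimately show False using iU by blast
qed

lemma orb_unaffected:
  assumes perm: "permutation p" and "i \<notin> orbit p x" "j \<notin> orbit p x"
  shows "orbit (p \<circ> transpose i j) x = orbit p x"
proof (rule orbit_cong)
  show "x \<in> orbit p x" using permutation_self_in_orbit[OF perm] .
  fix s assume "s \<in> orbit p x"
  then have "s \<noteq> i" "s \<noteq> j" using assms by auto
  then show "(p \<circ> transpose i j) s = p s" by simp
qed

lemma orb_merge_card:
  assumes pS: "p permutes S" and fS: "finite S" and iS: "i \<in> S" and jS: "j \<in> S"
    and ni: "j \<notin> orbit p i"
  shows "card (orbit (p \<circ> transpose i j) ` S) + 1 = card (orbit p ` S)"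
proof -
  have perm: "permutation p" using pS fS permutation_permutes by blast
  define Oi where "Oi = orbit p i"
  define Oj where "Oj = orbit p j"
  define R where "R = orbit p ` S - {Oi, Oj}"
  have ii: "i \<in> Oi" and jj: "j \<in> Oj" using permutation_self_in_orbit[OF perm] Oi_def Oj_def by auto
  have neq: "Oi \<noteq> Oj" using ni jj Oi_def by auto
  have ms: "orbit (p \<circ> transpose i j) i = Oi \<union> Oj"
    using orb_merge_set[OF perm ni] Oi_def Oj_def by simp
  have pp: "permutation (p \<circ> transpose i j)" by (simp add: perm permutation_compose permutation_swap_id)
  have out: "orbit (p \<circ> transpose i j) x = orbit p x \<and> orbit p x \<in> R"
    if "x \<in> S" "x \<notin> Oi \<union> Oj" for x
  proof -
    have "i \<notin> orbit p x" using that orb_sym[OF perm] Oi_def by blast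
    moreover have "j \<notin> orbit p x" using that orb_sym[OF perm] Oj_def by blast
    ultimately have "orbit (p \<circ> transpose i j) x = orbit p x" by (rule orb_unaffected[OF perm])
    moreover have "orbit p x \<noteq> Oi" "orbit p x \<noteq> Oj"
      using that permutation_self_in_orbit[OF perm, of x] by auto
    ultimately show ?thesis unfolding R_def using that by auto
  qed
  have Z': "orbit (p \<circ> transpose i j) ` S = insert (Oi \<union> Oj) R"
  proof
    show "orbit (p \<circ> transpose i j) ` S \<subseteq> insert (Oi \<union> Oj) R"
    proof
      fix Z assume "Z \<in> orbit (p \<circ> transpose i j) ` S"
      then obtain x where x: "x \<in> S" "Z = orbit (p \<circ> transpose i j) x" by auto
      show "Z \<in> insert (Oi \<union> Oj) R"
      proof (cases "x \<in> Oi \<union> Oj")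
        case True
        then have "Z = orbit (p \<circ> transpose i j) i" using x ms orb_same[OF pp] by metis
        then show ?thesis using ms by simp
      next
        case False then show ?thesis using out x by auto
      qed
    qed
  next
    show "insert (Oi \<union> Oj) R \<subseteq> orbit (p \<circ> transpose i j) ` S"
    proof
      fix Z assume Z: "Z \<in> insert (Oi \<union> Oj) R"
      show "Z \<in> orbit (p \<circ> transpose i j) ` S"
      proof (cases "Z = Oi \<union> Oj")
        case True then show ?thesis using ms iS by (metis image_eqI)
      next
        case False
        then obtain x where x: "x \<in> S" "Z = orbit p x" "Z \<noteq> Oi" "Z \<noteq> Oj" using Z R_def by auto
        have "x \<notin> Oi \<union> Oj"
        proof
          assume "x \<in> Oi \<union> Oj"
          then have "orbit p x = Oi \<or> orbit p x = Oj" using orb_same[OF perm] Oi_def Oj_def by blast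
          then show False using x by auto
        qed
        then show ?thesis using out x by (metis image_eqI)
      qed
    qed
  qed
  have notR: "Oi \<union> Oj \<notin> R"
  proof
    assume "Oi \<union> Oj \<in> R"
    then obtain x where x: "x \<in> S" "Oi \<union> Oj = orbit p x" "orbit p x \<noteq> Oi" using R_def by auto
    then have "i \<in> orbit p x" using ii by auto
    then have "orbit p i = orbit p x" using orb_same[OF perm] by metis
    then show False using x Oi_def by simp
  qed
  have finR: "finite R" using fS R_def by simp
  have Oe: "orbit p ` S = insert Oi (insert Oj R)" using R_def iS jS Oi_def Oj_def by auto
  have "card (orbit p ` S) = card R + 2"
    unfolding Oe using finR neq R_def by simp
  moreover have "card (orbit (p \<circ> transpose i j) ` S) = card R + 1"
    unfolding Z' using finR notR by simp
  ultimately show ?thesis by simp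
qed

lemma orb_transp_card:
  assumes pS: "p permutes S" and fS: "finite S" and iS: "i \<in> S" and jS: "j \<in> S" and ij: "i \<noteq> j"
  shows "card (orbit (p \<circ> transpose i j) ` S) + 1 = card (orbit p ` S) \<or>
         card (orbit p ` S) + 1 = card (orbit (p \<circ> transpose i j) ` S)"
proof (cases "j \<in> orbit p i")
  case False then show ?thesis using orb_merge_card[OF pS fS iS jS] by simp
next
  case True
  have perm: "permutation p" using pS fS permutation_permutes by blast
  have pS': "(p \<circ> transpose i j) permutes S"
    by (rule permutes_compose[OF permutes_swap_id[OF iS jS] pS])
  have "j \<notin> orbit (p \<circ> transpose i j) i" by (rule orb_separate[OF perm True ij])
  from orb_merge_card[OF pS' fS iS jS this]
  have "card (orbit (p \<circ> transpose i j \<circ> transpose i j) ` S) + 1 = card (orbit (p \<circ> transpose i j) ` S)" .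
  moreover have "p \<circ> transpose i j \<circ> transpose i j = p" by (simp add: o_assoc[symmetric])
  ultimately show ?thesis by simp
qed



lemma card_image_cong_eq:
  assumes "\<And>x y. x \<in> X \<Longrightarrow> y \<in> X \<Longrightarrow> g x = g y \<longleftrightarrow> h x = h y"
  shows "card (g ` X) = card (h ` X)"
proof -
  define F where "F = (\<lambda>C. h (inv_into X g C))"
  have "bij_betw F (g ` X) (h ` X)"
  proof (rule bij_betw_imageI)
    show "inj_on F (g ` X)"
    proof (rule inj_onI)
      fix a b assume a: "a \<in> g ` X" and b: "b \<in> g ` X" and e: "F a = F b"
      have ia: "inv_into X g a \<in> X" "g (inv_into X g a) = a" using a by (auto intro: inv_into_into f_inv_into_f)
      have ib: "inv_into X g b \<in> X" "g (inv_into X g b) = b" using b by (auto intro: inv_into_into f_inv_into_f)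
      show "a = b" using e assms[OF ia(1) ib(1)] ia ib unfolding F_def by simp
    qed
    show "F ` g ` X = h ` X"
    proof
      show "F ` g ` X \<subseteq> h ` X" unfolding F_def by (auto intro: inv_into_into)
      show "h ` X \<subseteq> F ` g ` X"
      proof
        fix c assume "c \<in> h ` X"
        then obtain x where x: "x \<in> X" "c = h x" by auto
        have i: "inv_into X g (g x) \<in> X" "g (inv_into X g (g x)) = g x" using x by (auto intro: inv_into_into f_inv_into_f)
        have "F (g x) = h x" using assms[OF i(1) x(1)] i unfolding F_def by simp
        then show "c \<in> F ` g ` X" using x by (metis imageI)
      qed
    qed
  qed
  then show ?thesis by (rule bij_betw_same_card)
qed

lemma L_adj_cases:
  assumes "(u, w) \<in> L_adj k A B"
  obtains a where "a \<in> {1..2*k}" "u = Inl {a, A a}" "w = Inr {a, B a}"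
        | a where "a \<in> {1..2*k}" "u = Inr {a, B a}" "w = Inl {a, A a}"
  using assms unfolding L_adj_def by blast

lemma loops_orbits:
  assumes pA: "pair_partition k A" and pB: "pair_partition k B" and QS: "Q \<subseteq> {1..2*k}"
    and hA: "\<And>x. x \<in> {1..2*k} \<Longrightarrow> x \<in> Q \<longleftrightarrow> A x \<notin> Q"
    and hB: "\<And>x. x \<in> {1..2*k} \<Longrightarrow> x \<in> Q \<longleftrightarrow> B x \<notin> Q"
  shows "(\<lambda>x. if x \<in> Q then B (A x) else x) permutes Q"
    and "num_loops k A B = card (orbit (\<lambda>x. if x \<in> Q then B (A x) else x) ` Q)"
proof -
  define \<rho> where "\<rho> = (\<lambda>x. if x \<in> Q then B (A x) else x)"
  have A1: "A x \<in> {1..2*k}" "A (A x) = x" if "x \<in> {1..2*k}" for x using pA that unfolding pair_partition_def by auto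
  have B1: "B x \<in> {1..2*k}" "B (B x) = x" if "x \<in> {1..2*k}" for x using pB that unfolding pair_partition_def by auto
  have fQ: "finite Q" using QS finite_subset by blast
  have into: "\<rho> ` Q \<subseteq> Q"
  proof
    fix y assume "y \<in> \<rho> ` Q"
    then obtain x where x: "x \<in> Q" "y = B (A x)" unfolding \<rho>_def by auto
    have xk: "x \<in> {1..2*k}" using x QS by auto
    then have ak: "A x \<in> {1..2*k}" using A1 by blast
    have "A x \<notin> Q" using hA[OF xk] x by simp
    then show "y \<in> Q" using hB[OF ak] x by simp
  qed
  have inj: "inj_on \<rho> Q"
  proof (rule inj_onI)
    fix x y assume xy: "x \<in> Q" "y \<in> Q" "\<rho> x = \<rho> y"
    then have k: "x \<in> {1..2*k}" "y \<in> {1..2*k}" using QS by auto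
    have "B (A x) = B (A y)" using xy unfolding \<rho>_def by simp
    then have "B (B (A x)) = B (B (A y))" by simp
    then have "A x = A y" using B1(2)[OF A1(1)[OF k(1)]] B1(2)[OF A1(1)[OF k(2)]] by simp
    then have "A (A x) = A (A y)" by simp
    then show "x = y" using A1(2)[OF k(1)] A1(2)[OF k(2)] by simp
  qed
  have perm: "\<rho> permutes Q"
  proof (rule bij_imp_permutes)
    show "bij_betw \<rho> Q Q" unfolding bij_betw_def using inj endo_inj_surj[OF fQ into inj] by simp
    show "\<And>x. x \<notin> Q \<Longrightarrow> \<rho> x = x" unfolding \<rho>_def by simp
  qed
  then show "(\<lambda>x. if x \<in> Q then B (A x) else x) permutes Q" unfolding \<rho>_def .
  have permu: "permutation \<rho>" using perm fQ permutation_permutes by blast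
  define V where "V = L_vertices k A B"
  define L where "L = L_adj k A B"
  define R where "R = L\<^sup>* \<inter> V \<times> V"
  define \<phi> where "\<phi> = (\<lambda>x. Inl {x, A x} :: nat set + nat set)"
  have symL: "sym L"
  proof (rule symI)
    fix u w assume "(u, w) \<in> L"
    then obtain a where a: "a \<in> {1..2*k}"
      and uw: "(u, w) \<in> {(Inl {a, A a}, Inr {a, B a}), (Inr {a, B a}, Inl {a, A a})}"
      unfolding L_def L_adj_def by (rule UN_E)
    from uw have "(w, u) \<in> {(Inl {a, A a}, Inr {a, B a}), (Inr {a, B a}, Inl {a, A a})}" by auto
    then show "(w, u) \<in> L" unfolding L_def L_adj_def using a by (rule UN_I[rotated])
  qed
  have eqR: "equiv V R"
  proof (rule equivI)
    show "R \<subseteq> V \<times> V" unfolding R_def by blast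
    show "refl_on V R" unfolding R_def refl_on_def by blast
    show "sym R" unfolding R_def by (intro sym_Int sym_rtrancl[OF symL]) (auto simp: sym_def)
    show "trans R" unfolding R_def by (intro trans_Int trans_rtrancl) (auto simp: trans_def)
  qed
  have phiV: "\<phi> x \<in> V" if "x \<in> Q" for x
  proof -
    have "x \<in> {1..2*k}" using that QS by blast
    then show ?thesis unfolding V_def L_vertices_def \<phi>_def by (intro UnI1 imageI)
  qed
  have reach: "\<exists>x\<in>Q. (v, \<phi> x) \<in> L\<^sup>*" if "v \<in> V" for v
  proof -
    have inl: "\<exists>x\<in>Q. (Inl {a, A a}, \<phi> x) \<in> L\<^sup>*" if a: "a \<in> {1..2*k}" for a
    proof (cases "a \<in> Q")
      case True then show ?thesis unfolding \<phi>_def by blast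
    next
      case False
      then have "A a \<in> Q" using hA[OF a] by simp
      moreover have "{a, A a} = {A a, A (A a)}" using A1 a by auto
      ultimately show ?thesis unfolding \<phi>_def by (metis rtrancl.rtrancl_refl)
    qed
    from that consider a where "a \<in> {1..2*k}" "v = Inl {a, A a}" | a where "a \<in> {1..2*k}" "v = Inr {a, B a}"
      unfolding V_def L_vertices_def by blast
    then show ?thesis
    proof cases
      case 1 then show ?thesis using inl by blast
    next
      case 2
      then have "(v, Inl {a, A a}) \<in> L" unfolding L_def L_adj_def by blast
      then show ?thesis using inl[OF 2(1)] by (meson converse_rtrancl_into_rtrancl)
    qed
  qed
  have onestep: "(\<phi> x, \<phi> (\<rho> x)) \<in> L\<^sup>*" if x: "x \<in> Q" for x
  proof -
    have xk: "x \<in> {1..2*k}" using x QS by auto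
    have ak: "A x \<in> {1..2*k}" using A1 xk by blast
    have bk: "B (A x) \<in> {1..2*k}" using B1 ak by blast
    have e1': "(Inl {A x, A (A x)}, Inr {A x, B (A x)}) \<in> L" unfolding L_def L_adj_def
      by (rule UN_I[OF ak]) simp
    have e2': "(Inr {B (A x), B (B (A x))}, Inl {B (A x), A (B (A x))}) \<in> L" unfolding L_def L_adj_def
      by (rule UN_I[OF bk]) simp
    have s1: "{A x, A (A x)} = {x, A x}" using A1 xk by auto
    have s2: "{B (A x), B (B (A x))} = {A x, B (A x)}" using B1 ak by auto
    have e1: "(\<phi> x, Inr {A x, B (A x)}) \<in> L" using e1' s1 unfolding \<phi>_def by simp
    have e2: "(Inr {A x, B (A x)}, \<phi> (\<rho> x)) \<in> L" using e2' s2 x unfolding \<phi>_def \<rho>_def by simp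
    show ?thesis by (rule rtrancl_into_rtrancl[OF r_into_rtrancl[OF e1] e2])
  qed
  have fwd: "(\<phi> x, \<phi> ((\<rho> ^^ n) x)) \<in> L\<^sup>*" if x: "x \<in> Q" for x n
  proof (induction n)
    case 0 then show ?case by simp
  next
    case (Suc n)
    have "(\<rho> ^^ n) x \<in> Q" using permutes_in_image[OF permutes_funpow[OF perm]] x by blast
    then have "(\<phi> ((\<rho> ^^ n) x), \<phi> ((\<rho> ^^ Suc n) x)) \<in> L\<^sup>*" using onestep by simp
    then show ?case using Suc.IH by (meson rtrancl_trans)
  qed
  have bwd: "y \<in> orbit \<rho> x" if x: "x \<in> Q" and y: "y \<in> Q" and r: "(\<phi> x, \<phi> y) \<in> L\<^sup>*" for x y
  proof -
    define W where "W = {Inl {y, A y} | y. y \<in> orbit \<rho> x} \<union> {Inr {A y, B (A y)} | y. y \<in> orbit \<rho> x}"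
    have oQ: "orbit \<rho> x \<subseteq> Q" using permutes_orbit_subset[OF perm x] .
    have clos: "w \<in> W" if uw: "(u, w) \<in> L" and u: "u \<in> W" for u w
    proof -
      from uw[unfolded L_def] show ?thesis
      proof (cases rule: L_adj_cases)
        case (1 a)
        then obtain z where z: "z \<in> orbit \<rho> x" "{a, A a} = {z, A z}" using u W_def by auto
        have zk: "z \<in> {1..2*k}" using z oQ QS by auto
        have "a = z \<or> a = A z" using z(2) by (metis doubleton_eq_iff)
        then show ?thesis
        proof
          assume az: "a = A z"
          then show ?thesis using 1 z W_def by auto
        next
          assume az: "a = z"
          have zo: "z \<in> orbit \<rho> z" using permutation_self_in_orbit[OF permu] .
          then obtain n where n: "z = (\<rho> ^^ n) z" "0 < n" unfolding orbit_altdef by auto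
          define z' where "z' = (\<rho> ^^ (n - 1)) z"
          have z'o: "z' \<in> orbit \<rho> x" unfolding z'_def by (rule funpow_in_orbit[OF z(1)])
          have "\<rho> z' = (\<rho> ^^ n) z" unfolding z'_def using n
            by (metis Suc_diff_1 comp_apply funpow.simps(2))
          then have rz: "\<rho> z' = z" using n by simp
          have z'Q: "z' \<in> Q" using z'o oQ by auto
          then have "B (A z') = z" using rz unfolding \<rho>_def by simp
          moreover have "A z' \<in> {1..2*k}" using z'Q QS A1 by auto
          ultimately have "B z = A z'" using B1(2) by metis
          then have "{a, B a} = {A z', B (A z')}" using az \<open>B (A z') = z\<close> by auto
          then show ?thesis using 1 z'o W_def by auto
        qed
      next
        case (2 a)
        then obtain z where z: "z \<in> orbit \<rho> x" "{a, B a} = {A z, B (A z)}" using u W_def by auto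
        have zQ: "z \<in> Q" using z oQ by auto
        have zk: "z \<in> {1..2*k}" using zQ QS by auto
        have "a = A z \<or> a = B (A z)" using z(2) by (metis doubleton_eq_iff)
        then show ?thesis
        proof
          assume az: "a = A z"
          then have "{a, A a} = {z, A z}" using A1 zk by auto
          then show ?thesis using 2 z W_def by auto
        next
          assume az: "a = B (A z)"
          then have "a = \<rho> z" using zQ unfolding \<rho>_def by simp
          moreover have "\<rho> z \<in> orbit \<rho> x" using z(1) by (rule orbit.step)
          ultimately show ?thesis using 2 W_def by auto
        qed
      qed
    qed
    have "\<phi> x \<in> W" unfolding W_def \<phi>_def using permutation_self_in_orbit[OF permu, of x] by auto
    have "\<phi> y \<in> W" using r
    proof (induction rule: rtrancl_induct)
      case base show ?case using \<open>\<phi> x \<in> W\<close> .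
    next
      case (step u w) then show ?case using clos by blast
    qed
    then obtain z where z: "z \<in> orbit \<rho> x" "{y, A y} = {z, A z}" unfolding W_def \<phi>_def by auto
    have zQ: "z \<in> Q" using z oQ by auto
    have "A z \<notin> Q" using zQ QS hA[of z] by auto
    then have "y = z" using z(2) y by (metis doubleton_eq_iff)
    then show ?thesis using z by simp
  qed
  have relR: "(\<phi> x, \<phi> y) \<in> R \<longleftrightarrow> y \<in> orbit \<rho> x" if "x \<in> Q" "y \<in> Q" for x y
  proof
    assume "(\<phi> x, \<phi> y) \<in> R" then show "y \<in> orbit \<rho> x" using bwd that unfolding R_def by blast
  next
    assume "y \<in> orbit \<rho> x"
    then obtain n where "y = (\<rho> ^^ n) x" unfolding orbit_altdef by auto
    then show "(\<phi> x, \<phi> y) \<in> R" using fwd that phiV unfolding R_def by blast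
  qed
  have quot: "V // R = (\<lambda>x. R `` {\<phi> x}) ` Q"
  proof
    show "V // R \<subseteq> (\<lambda>x. R `` {\<phi> x}) ` Q"
    proof
      fix C assume "C \<in> V // R"
      then obtain v where v: "v \<in> V" "C = R `` {v}" by (auto elim: quotientE)
      then obtain x where x: "x \<in> Q" "(v, \<phi> x) \<in> L\<^sup>*" using reach by blast
      then have "(v, \<phi> x) \<in> R" using v phiV unfolding R_def by blast
      then have "R `` {v} = R `` {\<phi> x}" using equiv_class_eq_iff[OF eqR] by blast
      then show "C \<in> (\<lambda>x. R `` {\<phi> x}) ` Q" using v x by auto
    qed
    show "(\<lambda>x. R `` {\<phi> x}) ` Q \<subseteq> V // R" using phiV by (auto intro: quotientI)
  qed
  have "card (V // R) = card (orbit \<rho> ` Q)"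
    unfolding quot
  proof (rule card_image_cong_eq)
    fix x y assume x: "x \<in> Q" and y: "y \<in> Q"
    have "R `` {\<phi> x} = R `` {\<phi> y} \<longleftrightarrow> (\<phi> x, \<phi> y) \<in> R"
      using equiv_class_eq_iff[OF eqR] phiV x y by blast
    also have "\<dots> \<longleftrightarrow> y \<in> orbit \<rho> x" using relR x y by blast
    also have "\<dots> \<longleftrightarrow> orbit \<rho> x = orbit \<rho> y"
      using orb_same[OF permu] permutation_self_in_orbit[OF permu] by metis
    finally show "R `` {\<phi> x} = R `` {\<phi> y} \<longleftrightarrow> orbit \<rho> x = orbit \<rho> y" .
  qed
  then show "num_loops k A B = card (orbit (\<lambda>x. if x \<in> Q then B (A x) else x) ` Q)"
    unfolding num_loops_def V_def L_def R_def \<rho>_def by simp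
qed



lemma nb_cases:
  assumes "neighbors a b"
  obtains m where "fst a = fst b" "snd a = 2*m+1" "snd b = 2*m+2"
        | m where "fst a = fst b" "snd a = 2*m+2" "snd b = 2*m+1"
  using assms unfolding neighbors_def doubleton_eq_iff by blast

lemma nb_parity: "neighbors a b \<Longrightarrow> odd (snd a) \<noteq> odd (snd b)"
  by (erule nb_cases) auto

lemma nb_arith:
  fixes x y z m n :: nat
  shows "(x = 2*m+1 \<and> y = 2*m+2 \<or> x = 2*m+2 \<and> y = 2*m+1) \<Longrightarrow>
         (x = 2*n+1 \<and> z = 2*n+2 \<or> x = 2*n+2 \<and> z = 2*n+1) \<Longrightarrow> y = z"
  by presburger

lemma nb_unique:
  assumes "neighbors a b" "neighbors a c" shows "b = c"
proof -
  obtain m where m: "fst a = fst b" "snd a = 2*m+1 \<and> snd b = 2*m+2 \<or> snd a = 2*m+2 \<and> snd b = 2*m+1"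
    using assms(1) by (cases rule: nb_cases) auto
  obtain n where n: "fst a = fst c" "snd a = 2*n+1 \<and> snd c = 2*n+2 \<or> snd a = 2*n+2 \<and> snd c = 2*n+1"
    using assms(2) by (cases rule: nb_cases) auto
  have "snd b = snd c" by (rule nb_arith[OF m(2) n(2)])
  then show ?thesis using m(1) n(1) by (simp add: prod_eq_iff)
qed

theorem lemma3p8:
  fixes k :: nat and S0 S1 S2 :: "nat \<Rightarrow> nat" and lam :: "nat list"
    and f :: "nat \<Rightarrow> nat \<times> nat" and i j :: nat
  assumes "pair_partition k S0" and "pair_partition k S1" and "pair_partition k S2"
    and "young_diagram lam"
    and "f ` {1..2*k} \<subseteq> boxes2 lam"
    and "i \<in> {1..2*k}" and "j \<in> {1..2*k}" and "i \<noteq> j" and "f i = f j"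
  shows "(conds k S0 S1 S2 f \<longleftrightarrow> conds k (perm_act (transpose i j) S0) S1 S2 f)
       \<and> (conds k S0 S1 S2 f \<longrightarrow>
            loop_sign k S0 S1 + loop_sign k (perm_act (transpose i j) S0) S1 = 0)"
proof -
  note pA = assms(1) and pB = assms(2) and ik = assms(6) and jk = assms(7) and ij = assms(8) and fij = assms(9)
  define \<tau> where "\<tau> = transpose i j"
  define S0' where "S0' = perm_act \<tau> S0"
  have S0'x: "S0' x = \<tau> (S0 (\<tau> x))" for x unfolding S0'_def perm_act_def \<tau>_def by simp
  have ftau: "f (\<tau> x) = f x" for x unfolding \<tau>_def using fij by (cases "x = i \<or> x = j") auto
  have A1: "S0 x \<in> {1..2*k}" "S0 (S0 x) = x" "S0 x \<noteq> x" if "x \<in> {1..2*k}" for x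
    using pA that unfolding pair_partition_def by auto
  have B1: "S1 x \<in> {1..2*k}" "S1 (S1 x) = x" "S1 x \<noteq> x" if "x \<in> {1..2*k}" for x
    using pB that unfolding pair_partition_def by auto
  have tk: "\<tau> x \<in> {1..2*k}" if "x \<in> {1..2*k}" for x
    using that ik jk unfolding \<tau>_def by (cases "x = i \<or> x = j") auto
  have key: "f (S0 i) = f (S0 j)" if "cond_P0 k S0 f \<or> cond_P0 k S0' f"
    using that
  proof
    assume h: "cond_P0 k S0 f"
    have "neighbors (f i) (f (S0 i))" using h ik unfolding cond_P0_def by blast
    moreover have "neighbors (f i) (f (S0 j))" using h jk fij unfolding cond_P0_def by metis
    ultimately show ?thesis by (rule nb_unique)
  next
    assume h: "cond_P0 k S0' f"
    have "neighbors (f i) (f (S0' i))" using h ik unfolding cond_P0_def by blast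
    moreover have "neighbors (f j) (f (S0' j))" using h jk unfolding cond_P0_def by blast
    moreover have "S0' i = \<tau> (S0 j)" "S0' j = \<tau> (S0 i)" using S0'x unfolding \<tau>_def by auto
    ultimately have "neighbors (f i) (f (S0 j))" "neighbors (f i) (f (S0 i))" using ftau fij by auto
    then show ?thesis using nb_unique by metis
  qed
  have eqf: "f (S0' x) = f (S0 x)" if "cond_P0 k S0 f \<or> cond_P0 k S0' f" for x
  proof -
    have "f (S0' x) = f (S0 (\<tau> x))" using S0'x ftau by simp
    also have "\<dots> = f (S0 x)" using key[OF that] unfolding \<tau>_def by (cases "x = i \<or> x = j") auto
    finally show ?thesis .
  qed
  have partA: "conds k S0 S1 S2 f \<longleftrightarrow> conds k S0' S1 S2 f"
  proof (cases "cond_P0 k S0 f \<or> cond_P0 k S0' f")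
    case True
    then show ?thesis unfolding conds_def cond_P0_def cond_P1_def using eqf[OF True] by simp
  next
    case False then show ?thesis unfolding conds_def by simp
  qed
  have partB: "loop_sign k S0 S1 + loop_sign k S0' S1 = 0" if c: "conds k S0 S1 S2 f"
  proof -
    have P0: "cond_P0 k S0 f" and P1: "cond_P1 k S0 S1 f" using c unfolding conds_def by auto
    note eqf = eqf[OF disjI1[OF P0]]
    define par where "par x = odd (snd (f x))" for x
    define Q where "Q = {x \<in> {1..2*k}. par x = par i}"
    have flipA: "par (S0 x) \<noteq> par x" if "x \<in> {1..2*k}" for x
      using nb_parity P0 that unfolding cond_P0_def par_def by metis
    have flipB: "par (S1 x) \<noteq> par x" if x: "x \<in> {1..2*k}" for x
    proof -
      have "snd (f x) = snd (f (S0 (S1 x)))" using P1 x unfolding cond_P1_def by blast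
      then have "par x = par (S0 (S1 x))" unfolding par_def by simp
      then show ?thesis using flipA[OF B1(1)[OF x]] by simp
    qed
    have flipA': "par (S0' x) \<noteq> par x" if "x \<in> {1..2*k}" for x
      using flipA[OF that] eqf[of x] unfolding par_def by simp
    have A'1: "S0' x \<in> {1..2*k}" "S0' (S0' x) = x" "S0' x \<noteq> x" if x: "x \<in> {1..2*k}" for x
    proof -
      show "S0' x \<in> {1..2*k}" unfolding S0'x using tk A1 x by blast
      have "\<tau> (\<tau> y) = y" for y unfolding \<tau>_def by simp
      then show "S0' (S0' x) = x" unfolding S0'x using A1(2)[OF tk[OF x]] by simp
      show "S0' x \<noteq> x"
      proof
        assume "S0' x = x"
        then have "\<tau> (\<tau> (S0 (\<tau> x))) = \<tau> x" unfolding S0'x by simp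
        then have "S0 (\<tau> x) = \<tau> x" unfolding \<tau>_def by simp
        then show False using A1(3)[OF tk[OF x]] by simp
      qed
    qed
    have pA': "pair_partition k S0'" unfolding pair_partition_def using A'1 by auto
    have QS: "Q \<subseteq> {1..2*k}" unfolding Q_def by auto
    have hA: "x \<in> Q \<longleftrightarrow> S0 x \<notin> Q" if x: "x \<in> {1..2*k}" for x
      using flipA[OF x] A1(1)[OF x] x unfolding Q_def by auto
    have hA': "x \<in> Q \<longleftrightarrow> S0' x \<notin> Q" if x: "x \<in> {1..2*k}" for x
      using flipA'[OF x] A'1(1)[OF x] x unfolding Q_def by auto
    have hB: "x \<in> Q \<longleftrightarrow> S1 x \<notin> Q" if x: "x \<in> {1..2*k}" for x
      using flipB[OF x] B1(1)[OF x] x unfolding Q_def by auto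
    have iQ: "i \<in> Q" and jQ: "j \<in> Q" using ik jk fij unfolding Q_def par_def by auto
    define \<rho> where "\<rho> = (\<lambda>x. if x \<in> Q then S1 (S0 x) else x)"
    have LA: "\<rho> permutes Q" "num_loops k S0 S1 = card (orbit \<rho> ` Q)"
      using loops_orbits[OF pA pB QS hA hB] unfolding \<rho>_def by auto
    have LA': "num_loops k S0' S1 = card (orbit (\<lambda>x. if x \<in> Q then S1 (S0' x) else x) ` Q)"
      using loops_orbits[OF pA' pB QS hA' hB] by auto
    have rr: "(\<lambda>x. if x \<in> Q then S1 (S0' x) else x) = \<rho> \<circ> \<tau>"
    proof
      fix x
      show "(if x \<in> Q then S1 (S0' x) else x) = (\<rho> \<circ> \<tau>) x"
      proof (cases "x \<in> Q")
        case True
        have tQ: "\<tau> x \<in> Q" using True iQ jQ unfolding \<tau>_def by (cases "x = i \<or> x = j") auto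
        have tx: "\<tau> x \<in> {1..2*k}" using tQ QS by auto
        have "S0 (\<tau> x) \<notin> Q" using hA[OF tx] tQ by simp
        then have "S0 (\<tau> x) \<noteq> i" "S0 (\<tau> x) \<noteq> j" using iQ jQ by auto
        then have "S0' x = S0 (\<tau> x)" unfolding S0'x \<tau>_def by simp
        then show ?thesis using True tQ unfolding \<rho>_def by simp
      next
        case False
        then have "x \<noteq> i" "x \<noteq> j" using iQ jQ by auto
        then have "\<tau> x = x" unfolding \<tau>_def by simp
        then show ?thesis using False unfolding \<rho>_def by simp
      qed
    qed
    have fQ: "finite Q" using QS finite_subset by blast
    have ch: "card (orbit (\<rho> \<circ> \<tau>) ` Q) + 1 = card (orbit \<rho> ` Q) \<or>
              card (orbit \<rho> ` Q) + 1 = card (orbit (\<rho> \<circ> \<tau>) ` Q)"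
      unfolding \<tau>_def by (rule orb_transp_card[OF LA(1) fQ iQ jQ ij])
    have cQ: "card Q \<le> k"
    proof -
      have inj: "inj_on S0 Q" using A1 QS by (metis inj_onI subsetD)
      have disj: "Q \<inter> S0 ` Q = {}" using hA QS by auto
      have sub: "Q \<union> S0 ` Q \<subseteq> {1..2*k}" using QS A1 by auto
      have "card (Q \<union> S0 ` Q) = card Q + card Q"
        using card_Un_disjoint[OF fQ _ disj] card_image[OF inj] fQ by simp
      moreover have "card (Q \<union> S0 ` Q) \<le> 2*k" using card_mono[OF _ sub] by simp
      ultimately show ?thesis by simp
    qed
    have b1: "card (orbit \<rho> ` Q) \<le> k" using card_image_le[OF fQ, of "orbit \<rho>"] cQ by simp
    have b2: "card (orbit (\<rho> \<circ> \<tau>) ` Q) \<le> k" using card_image_le[OF fQ, of "orbit (\<rho> \<circ> \<tau>)"] cQ by simp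
    have sgn: "(-1::int) ^ (k - a) + (-1) ^ (k - b) = 0" if "a + 1 = b \<or> b + 1 = a" "a \<le> k" "b \<le> k" for a b
    proof -
      from that consider "k - a = Suc (k - b)" | "k - b = Suc (k - a)" by linarith
      then show ?thesis by cases simp_all
    qed
    show ?thesis unfolding loop_sign_def LA(2) LA' rr using sgn[OF _ b1 b2] ch by auto
  qed
  show ?thesis using partA partB unfolding S0'_def \<tau>_def by blast
qed

end
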